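(* Let $Z,A\in\mathfrak m_0$ with $\mathrm{ad}_Z^2A=\nu_1A$ and $\mathrm{ad}_{JZ}^2A=\nu_2A$ (where $\nu_1,\nu_2\ge0$). Then $A$ is an eigenvector of $E_Z$, $E_{JZ}$, $S_Z$, $S_{JZ}$ with eigenvalues $\frac{\sinh\sqrt{\nu_1}}{\sqrt{\nu_1}}$, $\frac{\sinh\sqrt{\nu_2}}{\sqrt{\nu_2}}$, $\cosh\sqrt{\nu_1}$, $\cosh\sqrt{\nu_2}$ respectively, and $JA$ is an eigenvector of $E_Z$, $E_{JZ}$, $S_Z$, $S_{JZ}$ with eigenvalues $\frac{\sinh\sqrt{\nu_2}}{\sqrt{\nu_2}}$, $\frac{\sinh\sqrt{\nu_1}}{\sqrt{\nu_1}}$, $\cosh\sqrt{\nu_2}$, $\cosh\sqrt{\nu_1}$ respectively.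
   Context: Let $G$ be a simple complex algebraic group with commuting antiholomorphic involutions $\sigma,\theta$, $G_u=G^\theta$ maximal compact, $G_0=G^\sigma$, $K=G^{\sigma\theta}$, $K_0=K\cap G_0$. $\mathfrak g=\mathfrak k\oplus\mathfrak m$ is the $\pm1$-eigenspace decomposition of $\sigma\theta$, $\mathfrak m_0=\mathfrak m\cap\mathfrak g_0$. Assume $G_u/K_0$ is an irreducible Hermitian symmetric space of compact type; $\Upsilon$ is in the center of $\mathfrak k\cap\mathfrak g_0$ with $\mathrm{ad}_\Upsilon$ having eigenvalues $\pm i$ on $\mathfrak m$; $J=\mathrm{ad}_\Upsilon|_{\mathfrak m}$ (preserving $\mathfrak m_0$). For $Y\in\mathfrak m_0$: $E_Y=\sum_{n\ge0}\frac{\mathrm{ad}_Y^{2n}}{(2n+1)!}$, $S_Y=\sum_{n\ge0}\frac{\mathrm{ad}_Y^{2n}}{(2n)!}$, acting on $\mathfrak m_0$. The expression $\frac{\sinh\sqrt\nu}{\sqrt\nu}$ is interpreted as $1$ when $\nu=0$. For $Y\in\mathfrak m_0$, $\mathrm{ad}_Y^2$ is diagonalizable on $\mathfrak m_0$ with nonnegative real eigenvalues. *)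

theory Defs
  imports "HOL-Analysis.Analysis"
begin

text \<open>Abstract model of the real Lie algebra g0 = k0 (+) m0 of the setting:
  a finite-dimensional real Lie algebra with bracket br, a symmetric
  decomposition into subspaces K (= k0) and M (= m0), and an element Ups
  (= Upsilon) central in K with ad_Ups^2 = -1 on M (ad_Ups has eigenvalues +-i on m).\<close>

definition lie_bracket :: "('g::real_vector \<Rightarrow> 'g \<Rightarrow> 'g) \<Rightarrow> bool" where
  "lie_bracket br \<longleftrightarrow> bilinear br \<and> (\<forall>x. br x x = 0) \<and>
     (\<forall>x y z. br x (br y z) + br y (br z x) + br z (br x y) = 0)"

definition herm_sym_data ::
  "('g::real_vector \<Rightarrow> 'g \<Rightarrow> 'g) \<Rightarrow> 'g set \<Rightarrow> 'g set \<Rightarrow> 'g \<Rightarrow> bool" where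
  "herm_sym_data br K M Ups \<longleftrightarrow>
     lie_bracket br \<and> subspace K \<and> subspace M \<and> K \<inter> M = {0} \<and>
     (\<forall>x. \<exists>k\<in>K. \<exists>m\<in>M. x = k + m) \<and>
     (\<forall>x\<in>K. \<forall>y\<in>K. br x y \<in> K) \<and>
     (\<forall>x\<in>K. \<forall>y\<in>M. br x y \<in> M) \<and>
     (\<forall>x\<in>M. \<forall>y\<in>M. br x y \<in> K) \<and>
     Ups \<in> K \<and> (\<forall>x\<in>K. br Ups x = 0) \<and>
     (\<forall>x\<in>M. br Ups (br Ups x) = - x)"

definition Jop :: "('g \<Rightarrow> 'g \<Rightarrow> 'g) \<Rightarrow> 'g \<Rightarrow> 'g \<Rightarrow> 'g" where
  "Jop br Ups x = br Ups x"

definition E_op :: "('g::real_normed_vector \<Rightarrow> 'g \<Rightarrow> 'g) \<Rightarrow> 'g \<Rightarrow> 'g \<Rightarrow> 'g" where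
  "E_op br Y v = (\<Sum>n. ((br Y ^^ (2*n)) v) /\<^sub>R fact (2*n+1))"

definition S_op :: "('g::real_normed_vector \<Rightarrow> 'g \<Rightarrow> 'g) \<Rightarrow> 'g \<Rightarrow> 'g \<Rightarrow> 'g" where
  "S_op br Y v = (\<Sum>n. ((br Y ^^ (2*n)) v) /\<^sub>R fact (2*n))"

definition sinhc :: "real \<Rightarrow> real" where
  "sinhc \<nu> = (if \<nu> = 0 then 1 else sinh (sqrt \<nu>) / sqrt \<nu>)"

definition is_eigvec :: "('g::real_vector \<Rightarrow> 'g) \<Rightarrow> 'g \<Rightarrow> real \<Rightarrow> bool" where
  "is_eigvec T v c \<longleftrightarrow> v \<noteq> 0 \<and> T v = c *\<^sub>R v"

end

theory Submission
  imports Defs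
begin

lemma sqpow: "(0::real) \<le> v \<Longrightarrow> sqrt v ^ (2*n) = v^n"
  by (metis power_mult real_sqrt_pow2)

lemma sqpow2: "(0::real) \<le> v \<Longrightarrow> sqrt v ^ (n*2) = v^n"
  by (metis sqpow mult.commute)

lemma cosh_ser: "(\<lambda>n. (\<nu>::real)^n / fact (2*n)) sums cosh (sqrt \<nu>)" if "\<nu> \<ge> 0"
proof -
  have "(\<lambda>n. if even n then sqrt \<nu> ^ n /\<^sub>R fact n else 0) sums cosh (sqrt \<nu>)"
    by (rule cosh_converges)
  also have "?this \<longleftrightarrow> (\<lambda>n. sqrt \<nu> ^ (2*n) /\<^sub>R fact (2*n)) sums cosh (sqrt \<nu>)"
    by (subst sums_mono_reindex[of "\<lambda>n. 2*n", symmetric])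
       (auto simp: strict_mono_def elim!: evenE)
  finally show ?thesis using that
    by (simp add: sqpow2 divide_inverse mult.commute)
qed

lemma sinh_ser: "(\<lambda>n. (\<nu>::real)^n / fact (2*n+1)) sums sinhc \<nu>" if "\<nu> \<ge> 0"
proof (cases "\<nu> = 0")
  case True
  have "(\<lambda>n. if n = 0 then 1 else 0::real) sums 1"
    using sums_single[of 0 "\<lambda>_. 1::real"] by simp
  moreover have "(\<lambda>n. (\<nu>::real)^n / fact (2*n+1)) = (\<lambda>n. if n = 0 then 1 else 0::real)"
    using True by auto
  ultimately show ?thesis using True by (simp add: sinhc_def)
next
  case False
  have "(\<lambda>n. if even n then 0 else sqrt \<nu> ^ n /\<^sub>R fact n) sums sinh (sqrt \<nu>)"
    by (rule sinh_converges)
  also have "?this \<longleftrightarrow> (\<lambda>n. sqrt \<nu> ^ (2*n+1) /\<^sub>R fact (2*n+1)) sums sinh (sqrt \<nu>)"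
    by (subst sums_mono_reindex[of "\<lambda>n. 2*n+1", symmetric])
       (auto simp: strict_mono_def elim!: oddE)
  finally have "(\<lambda>n. sqrt \<nu> ^ (2*n+1) /\<^sub>R fact (2*n+1) / sqrt \<nu>) sums (sinh (sqrt \<nu>) / sqrt \<nu>)"
    by (rule sums_divide)
  moreover have "(\<lambda>n. sqrt \<nu> ^ (2*n+1) /\<^sub>R fact (2*n+1) / sqrt \<nu>) = (\<lambda>n. \<nu>^n / fact (2*n+1))"
  proof
    fix n
    have "sqrt \<nu> ^ (2*n+1) = sqrt \<nu> * \<nu>^n" using that sqpow[of \<nu> n] by simp
    then show "sqrt \<nu> ^ (2*n+1) /\<^sub>R fact (2*n+1) / sqrt \<nu> = \<nu>^n / fact (2*n+1)"
      using that False by (simp add: field_simps del: fact_Suc)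
  qed
  ultimately show ?thesis using False by (simp add: sinhc_def)
qed

lemma pow_eig:
  assumes "linear f" "f (f v) = \<nu> *\<^sub>R v"
  shows "(f ^^ (2*n)) v = \<nu>^n *\<^sub>R v"
proof (induction n)
  case 0 then show ?case by simp
next
  case (Suc n)
  have "(f ^^ (2*Suc n)) v = f (f ((f ^^ (2*n)) v))" by simp
  also have "\<dots> = \<nu>^n *\<^sub>R f (f v)" using Suc assms(1) by (simp add: linear_cmul)
  also have "\<dots> = \<nu>^Suc n *\<^sub>R v" using assms(2) by (simp add: mult.commute)
  finally show ?case .
qed

lemma ops_eig:
  assumes "linear (br Y)" "br Y (br Y v) = \<nu> *\<^sub>R v" "\<nu> \<ge> 0"
  shows "E_op br Y v = sinhc \<nu> *\<^sub>R v" "S_op br Y v = cosh (sqrt \<nu>) *\<^sub>R v"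
proof -
  have p: "\<And>n. (br Y ^^ (2*n)) v = \<nu>^n *\<^sub>R v" using pow_eig[OF assms(1,2)] .
  have "(\<lambda>n. (\<nu>^n / fact (2*n+1)) *\<^sub>R v) sums (sinhc \<nu> *\<^sub>R v)"
    by (rule sums_scaleR_left[OF sinh_ser[OF assms(3)]])
  then show "E_op br Y v = sinhc \<nu> *\<^sub>R v"
    unfolding E_op_def p by (simp add: sums_iff divide_inverse mult.commute)
  have "(\<lambda>n. (\<nu>^n / fact (2*n)) *\<^sub>R v) sums (cosh (sqrt \<nu>) *\<^sub>R v)"
    by (rule sums_scaleR_left[OF cosh_ser[OF assms(3)]])
  then show "S_op br Y v = cosh (sqrt \<nu>) *\<^sub>R v"
    unfolding S_op_def p by (simp add: sums_iff divide_inverse mult.commute)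
qed

theorem theorem5p2:
  fixes br :: "'g::euclidean_space \<Rightarrow> 'g \<Rightarrow> 'g"
    and K M :: "'g set" and Ups Z A :: 'g and \<nu>1 \<nu>2 :: real
  assumes hs: "herm_sym_data br K M Ups"
    and Z: "Z \<in> M" and A: "A \<in> M" and A0: "A \<noteq> 0"
    and nu1: "\<nu>1 \<ge> 0" and nu2: "\<nu>2 \<ge> 0"
    and h1: "br Z (br Z A) = \<nu>1 *\<^sub>R A"
    and h2: "br (Jop br Ups Z) (br (Jop br Ups Z) A) = \<nu>2 *\<^sub>R A"
  shows "is_eigvec (E_op br Z) A (sinhc \<nu>1) \<and>
         is_eigvec (E_op br (Jop br Ups Z)) A (sinhc \<nu>2) \<and>
         is_eigvec (S_op br Z) A (cosh (sqrt \<nu>1)) \<and>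
         is_eigvec (S_op br (Jop br Ups Z)) A (cosh (sqrt \<nu>2)) \<and>
         is_eigvec (E_op br Z) (Jop br Ups A) (sinhc \<nu>2) \<and>
         is_eigvec (E_op br (Jop br Ups Z)) (Jop br Ups A) (sinhc \<nu>1) \<and>
         is_eigvec (S_op br Z) (Jop br Ups A) (cosh (sqrt \<nu>2)) \<and>
         is_eigvec (S_op br (Jop br Ups Z)) (Jop br Ups A) (cosh (sqrt \<nu>1))"
proof -
  have lb: "lie_bracket br" and KK: "\<forall>x\<in>K. br Ups x = 0"
    and KM: "\<forall>x\<in>K. \<forall>y\<in>M. br x y \<in> M" and MM: "\<forall>x\<in>M. \<forall>y\<in>M. br x y \<in> K"
    and UK: "Ups \<in> K" and JJ: "\<forall>x\<in>M. br Ups (br Ups x) = - x"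
    using hs unfolding herm_sym_data_def by auto
  have bil: "bilinear br" and alt: "\<And>x. br x x = 0"
    and jac: "\<And>x y z. br x (br y z) + br y (br z x) + br z (br x y) = 0"
    using lb unfolding lie_bracket_def by auto
  have linl: "\<And>x. linear (br x)" using bil unfolding bilinear_def by auto
  have linr: "\<And>y. linear (\<lambda>x. br x y)" using bil unfolding bilinear_def by auto
  have add1: "\<And>x y z. br (x + y) z = br x z + br y z"
    using linear_add[OF linr] by blast
  have add2: "\<And>x y z. br z (x + y) = br z x + br z y"
    using linear_add[OF linl] by blast
  have skew: "\<And>x y. br y x = - br x y"
  proof -
    fix x y
    have "0 = br (x+y) (x+y)" by (rule alt[symmetric])
    also have "\<dots> = br x x + br y x + (br x y + br y y)" by (simp only: add1 add2)
    also have "\<dots> = br x y + br y x" by (simp only: alt add.commute add_0_left add_0_right)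
    finally have "br x y + br y x = 0" by simp
    then show "br y x = - br x y" by (simp add: eq_neg_iff_add_eq_0 add.commute)
  qed
  have neg2: "\<And>x y. br x (- y) = - br x y" using linl by (simp add: linear_neg)
  have neg1: "\<And>x y. br (- x) y = - br x y" using linr by (metis linear_neg)
  have der: "\<And>x y. br Ups (br x y) = br (br Ups x) y + br x (br Ups y)"
  proof -
    fix x y
    have "br Ups (br x y) + br x (br y Ups) + br y (br Ups x) = 0" by (rule jac)
    then show "br Ups (br x y) = br (br Ups x) y + br x (br Ups y)"
      by (metis skew neg2 add.commute add_eq_0_iff eq_neg_iff_add_eq_0 minus_add_distrib add.assoc)
  qed
  define J where "J = br Ups"
  have JM: "\<And>x. x \<in> M \<Longrightarrow> J x \<in> M" using KM UK unfolding J_def by auto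
  have JK0: "\<And>x y. x \<in> M \<Longrightarrow> y \<in> M \<Longrightarrow> J (br x y) = 0"
    using KK MM unfolding J_def by auto
  have JJ': "\<And>x. x \<in> M \<Longrightarrow> J (J x) = - x" using JJ unfolding J_def by auto
  have derJ: "\<And>x y. J (br x y) = br (J x) y + br x (J y)" using der unfolding J_def by auto
  have linJ: "linear J" unfolding J_def by (rule linl)
  have JZ: "J Z \<in> M" and JA: "J A \<in> M" using JM Z A by auto
  have e1: "br (J Z) A = - br Z (J A)"
    using JK0[OF Z A] derJ[of Z A] by (simp add: eq_neg_iff_add_eq_0)
  have e2: "br (J Z) (J A) = br Z A"
    using JK0[OF JZ A] derJ[of "J Z" A] JJ'[OF Z] neg1 by (simp add: eq_neg_iff_add_eq_0 add.commute)
  have g1: "br Z (br Z (J A)) = \<nu>2 *\<^sub>R J A"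
  proof -
    have "J (br (J Z) (br (J Z) A)) = br (J (J Z)) (br (J Z) A) + br (J Z) (J (br (J Z) A))"
      by (rule derJ)
    also have "\<dots> = - br Z (br (J Z) A)" using JJ'[OF Z] JK0[OF JZ A] neg1
      by (simp add: linear_0[OF linl])
    also have "\<dots> = br Z (br Z (J A))" using e1 neg2 by simp
    finally show ?thesis using h2 linJ unfolding Jop_def J_def[symmetric]
      by (simp add: linear_cmul)
  qed
  have g2: "br (J Z) (br (J Z) (J A)) = \<nu>1 *\<^sub>R J A"
  proof -
    have "J (br Z (br Z A)) = br (J Z) (br Z A) + br Z (J (br Z A))"
      by (rule derJ)
    also have "\<dots> = br (J Z) (br Z A)" using JK0[OF Z A] by (simp add: linear_0[OF linl])
    also have "\<dots> = br (J Z) (br (J Z) (J A))" using e2 by simp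
    finally show ?thesis using h1 linJ by (simp add: linear_cmul)
  qed
  have JA0: "J A \<noteq> 0"
  proof
    assume "J A = 0"
    then have "J (J A) = 0" using linJ by (simp add: linear_0)
    then show False using JJ'[OF A] A0 by simp
  qed
  note r1 = ops_eig[of br Z A, OF linl h1 nu1]
  note r2 = ops_eig[of br "br Ups Z" A, OF linl h2[unfolded Jop_def] nu2]
  note r3 = ops_eig[of br Z "J A", OF linl g1 nu2]
  note r4 = ops_eig[of br "J Z" "J A", OF linl g2 nu1]
  show ?thesis unfolding is_eigvec_def Jop_def J_def[symmetric]
    using r1 r2 r3 r4 A0 JA0 unfolding J_def by simp
qed

end
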